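(* Let $G$ be a countably infinite group and $C<G$ a finite cyclic subgroup of prime order, with normalizer $N(C)=\{g\in G: gCg^{-1}=C\}$. Let $(K,\kappa)$ be a nontrivial standard probability space. If $G/N(C)$ is infinite, then the action $G\curvearrowright (K^{G/C},\kappa^{G/C})$ is essentially free.
   Context: $(K^{G/C},\kappa^{G/C})$ is the product space of maps $x:G/C\to K$ with product measure, and $G$ acts by $(gx)(fC)=x(g^{-1}fC)$ (the generalized Bernoulli shift over $G/C$). Nontrivial means $\kappa$ is not concentrated on a single point. Essentially free means that for every $g\ne e$, the set $\{x: gx=x\}$ has measure zero. *)

theory Defs
  imports "HOL-Algebra.Group_Action" "HOL-Algebra.Elementary_Groups" "HOL-Algebra.Left_Coset"
          "HOL-Probability.Probability"
begin

definition gen_shift :: "('a, 'b) monoid_scheme \<Rightarrow> 'a set \<Rightarrow> 'a \<Rightarrow> ('a set \<Rightarrow> 'k) \<Rightarrow> ('a set \<Rightarrow> 'k)"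
  where "gen_shift G C g x = (\<lambda>A \<in> lcosets\<^bsub>G\<^esub> C. x (inv\<^bsub>G\<^esub> g <#\<^bsub>G\<^esub> A))"

definition shift_space :: "('a, 'b) monoid_scheme \<Rightarrow> 'a set \<Rightarrow> 'k measure \<Rightarrow> ('a set \<Rightarrow> 'k) measure"
  where "shift_space G C M = PiM (lcosets\<^bsub>G\<^esub> C) (\<lambda>_. M)"

end

theory Submission
  imports Defs
begin

lemma (in group) conj_into_normalizer:
  assumes C: "subgroup C G" "finite C" "prime (card C)"
    and h: "h \<in> carrier G" and c: "c \<in> C" "c \<noteq> \<one>" and hc: "h \<otimes> c \<otimes> inv h \<in> C"
  shows "h \<in> normalizer G C"
proof -
  have Cc: "C \<subseteq> carrier G" using C(1) subgroup.subset by blast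
  define D where "D = {x \<in> C. h \<otimes> x \<otimes> inv h \<in> C}"
  have sD: "subgroup D G"
  proof (rule subgroupI)
    show "D \<subseteq> carrier G" using Cc D_def by auto
    show "D \<noteq> {}" using c hc D_def by auto
  next
    fix x assume "x \<in> D"
    then have x: "x \<in> C" "h \<otimes> x \<otimes> inv h \<in> C" by (auto simp: D_def)
    have xc: "x \<in> carrier G" using x Cc by auto
    have "inv (h \<otimes> x \<otimes> inv h) = h \<otimes> inv x \<otimes> inv h"
      using h xc by (simp add: inv_mult_group m_assoc)
    then show "inv x \<in> D" using x C(1) unfolding D_def
      by (metis (no_types, lifting) mem_Collect_eq subgroup.m_inv_closed)
  next
    fix x y assume "x \<in> D" "y \<in> D"
    then have x: "x \<in> C" "h \<otimes> x \<otimes> inv h \<in> C" "y \<in> C" "h \<otimes> y \<otimes> inv h \<in> C" by (auto simp: D_def)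
    have xc: "x \<in> carrier G" "y \<in> carrier G" using x Cc by auto
    have cancel: "\<And>z. z \<in> carrier G \<Longrightarrow> inv h \<otimes> (h \<otimes> z) = z"
      using h by (simp add: m_assoc[symmetric])
    have "(h \<otimes> x \<otimes> inv h) \<otimes> (h \<otimes> y \<otimes> inv h) = h \<otimes> (x \<otimes> y) \<otimes> inv h"
      using h xc by (simp add: m_assoc cancel)
    then show "x \<otimes> y \<in> D" using x C(1) unfolding D_def
      by (metis (no_types, lifting) mem_Collect_eq subgroup.m_closed)
  qed
  have DC: "D \<subseteq> C" by (auto simp: D_def)
  interpret H: group "G\<lparr>carrier := C\<rparr>" using C(1) subgroup_imp_group by blast
  have sDH: "subgroup D (G\<lparr>carrier := C\<rparr>)" using subgroup_incl[OF sD C(1) DC] .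
  have "card (rcosets\<^bsub>G\<lparr>carrier := C\<rparr>\<^esub> D) * card D = card C"
    using H.lagrange[OF sDH] by (simp add: Coset.order_def)
  then have dvd: "card D dvd card C" by (metis dvd_triv_right)
  have "\<one> \<in> D" "c \<in> D" using sD subgroup.one_closed c hc D_def by auto
  then have "{\<one>, c} \<subseteq> D" by auto
  moreover have fD: "finite D" using DC C(2) finite_subset by blast
  ultimately have "card {\<one>, c} \<le> card D" by (meson card_mono)
  then have "card D \<noteq> 1" using c(2) by auto
  then have "card D = card C" using dvd C(3) by (meson prime_nat_iff)
  then have DC': "D = C" using DC C(2) card_subset_eq by blast
  define f where "f = (\<lambda>x. h \<otimes> x \<otimes> inv h)"
  have img: "h <# C #> inv h = f ` C"
    unfolding f_def l_coset_def r_coset_def by auto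
  have sub: "f ` C \<subseteq> C" using DC' unfolding D_def f_def by auto
  have "inj_on f C"
  proof (rule inj_onI)
    fix x y assume xy: "x \<in> C" "y \<in> C" "f x = f y"
    then have "x \<in> carrier G" "y \<in> carrier G" using Cc by auto
    then show "x = y" using xy(3) h unfolding f_def by simp
  qed
  then have "card (f ` C) = card C" by (simp add: card_image)
  then have "f ` C = C" using sub C(2) card_subset_eq by blast
  then show ?thesis using h Cc img unfolding normalizer_def stabilizer_def by auto
qed

lemma (in group) lcos_finite:
  assumes "finite C" "A \<in> lcosets C"
  shows "finite A"
  using assms unfolding LCOSETS_def l_coset_def by auto

lemma (in group) moved_infinite:
  assumes C: "subgroup C G" "finite C" "prime (card C)"
    and inf: "infinite (carrier G)" "infinite (lcosets (normalizer G C))"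
    and k: "k \<in> carrier G" "k \<noteq> \<one>"
  shows "infinite {A \<in> lcosets C. k <# A \<noteq> A}"
proof
  let ?S = "{A \<in> lcosets C. k <# A \<noteq> A}"
  assume fS: "finite ?S"
  have Cc: "C \<subseteq> carrier G" using C(1) subgroup.subset by blast
  have can1: "\<And>x z. x \<in> carrier G \<Longrightarrow> z \<in> carrier G \<Longrightarrow> x \<otimes> (inv x \<otimes> z) = z"
    by (metis inv_closed m_assoc r_inv l_one)
  have can2: "\<And>x z. x \<in> carrier G \<Longrightarrow> z \<in> carrier G \<Longrightarrow> inv x \<otimes> (x \<otimes> z) = z"
    by (metis inv_closed m_assoc l_inv l_one)
  have fixed: "inv f \<otimes> (k \<otimes> f) \<in> C" if f: "f \<in> carrier G" "k <# (f <# C) = f <# C" for f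
  proof -
    have "k <# (f <# C) = (k \<otimes> f) <# C" using lcos_m_assoc Cc k f by blast
    then have "k \<otimes> f \<in> f <# C" using lcos_self[OF _ C(1), of "k \<otimes> f"] f k by simp
    then show ?thesis using subgroup.lcos_module_imp[OF C(1) is_group f(1)] by blast
  qed
  have fUS: "finite (\<Union>?S)" using fS lcos_finite[OF C(2)] by auto
  show False
  proof (cases "\<exists>A \<in> lcosets C. k <# A = A")
    case False
    then have "?S = lcosets C" by auto
    then have "finite (\<Union>(lcosets C))" using fUS by simp
    then show False using lcosets_part_G[OF C(1)] inf(1) by simp
  next
    case True
    then obtain f0 where f0: "f0 \<in> carrier G" "k <# (f0 <# C) = f0 <# C"
      unfolding LCOSETS_def by auto
    define c0 where "c0 = inv f0 \<otimes> (k \<otimes> f0)"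
    have c0: "c0 \<in> C" using fixed[OF f0] c0_def by simp
    define N where "N = normalizer G C"
    have sN: "subgroup N G" unfolding N_def using normalizer_imp_subgroup Cc by blast
    have cov: "carrier G - (f0 <# N) \<subseteq> \<Union>?S"
    proof
      fix f assume fa: "f \<in> carrier G - (f0 <# N)"
      then have f: "f \<in> carrier G" "f \<notin> f0 <# N" by auto
      have A: "f <# C \<in> lcosets C" using f unfolding LCOSETS_def by auto
      have "k <# (f <# C) \<noteq> f <# C"
      proof
        assume fx: "k <# (f <# C) = f <# C"
        define c where "c = inv f \<otimes> (k \<otimes> f)"
        have c: "c \<in> C" using fixed[OF f(1) fx] c_def by simp
        have "c \<noteq> \<one>"
        proof
          assume "c = \<one>"
          moreover have "k \<otimes> f = f \<otimes> c" unfolding c_def using f k can1 by simp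
          ultimately have "k \<otimes> f = f \<otimes> \<one>" by simp
          then show False using f k by simp
        qed
        define h where "h = inv f0 \<otimes> f"
        have hc: "h \<in> carrier G" using h_def f f0 by simp
        have e1: "inv h = inv f \<otimes> f0" using f f0 by (simp add: h_def inv_mult_group)
        have e2: "h \<otimes> c = inv f0 \<otimes> (k \<otimes> f)" using f f0 k by (simp add: h_def c_def m_assoc can1)
        have "h \<otimes> c \<otimes> inv h = c0"
          unfolding e1 e2 c0_def using f f0 k by (simp add: m_assoc can1)
        then have "h \<in> N" unfolding N_def
          using conj_into_normalizer[OF C hc c \<open>c \<noteq> \<one>\<close>] c0 by simp
        then have "f0 \<otimes> h \<in> f0 <# N" unfolding l_coset_def by auto
        moreover have "f0 \<otimes> h = f" unfolding h_def using f f0 by (simp add: can1)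
        ultimately show False using f by simp
      qed
      then have "f <# C \<in> ?S" using A by simp
      moreover have "f \<in> f <# C" using lcos_self[OF f(1) C(1)] .
      ultimately show "f \<in> \<Union>?S" by blast
    qed
    then have fin: "finite (carrier G - (f0 <# N))" using fUS finite_subset by blast
    have "lcosets N \<subseteq> insert (f0 <# N) (Pow (carrier G - (f0 <# N)))"
    proof
      fix B assume B: "B \<in> lcosets N"
      have f0N: "f0 <# N \<in> lcosets N" using f0 unfolding LCOSETS_def by auto
      have "B \<subseteq> carrier G" using B lcosets_subset_PowG[OF sN] by auto
      moreover have "B \<noteq> f0 <# N \<Longrightarrow> B \<inter> (f0 <# N) = {}" using lcos_disjoint[OF sN B f0N] by simp
      ultimately show "B \<in> insert (f0 <# N) (Pow (carrier G - (f0 <# N)))" by auto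
    qed
    then have "finite (lcosets N)" using fin finite_subset by blast
    then show False using inf(2) N_def by simp
  qed
qed

lemma pairs_exist:
  fixes n :: nat
  assumes S: "infinite S" and t: "\<And>A. A \<in> S \<Longrightarrow> \<tau> A \<noteq> A" and r: "\<And>A. A \<in> S \<Longrightarrow> \<rho> (\<tau> A) = A"
  shows "\<exists>a. (\<forall>j<n. a j \<in> S) \<and> disjoint_family_on (\<lambda>j. {a j, \<tau> (a j)}) {..<n}"
proof (induction n)
  case 0
  then show ?case by (auto simp: disjoint_family_on_def)
next
  case (Suc n)
  then obtain a where a: "\<forall>j<n. a j \<in> S" "disjoint_family_on (\<lambda>j. {a j, \<tau> (a j)}) {..<n}" by blast
  define F where "F = (\<Union>j<n. {a j, \<tau> (a j), \<rho> (a j), \<rho> (\<tau> (a j))})"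
  have "finite F" unfolding F_def by auto
  then obtain b where b: "b \<in> S" "b \<notin> F" using S
    by (metis Diff_iff finite_Diff2 infinite_imp_nonempty ex_in_conv)
  define a' where "a' = a(n := b)"
  have "\<forall>j<Suc n. a' j \<in> S" using a b unfolding a'_def by (auto simp: less_Suc_eq)
  moreover have "disjoint_family_on (\<lambda>j. {a' j, \<tau> (a' j)}) {..<Suc n}"
  proof -
    have new: "{b, \<tau> b} \<inter> {a j, \<tau> (a j)} = {}" if j: "j < n" for j
    proof -
      have "b \<noteq> a j" "b \<noteq> \<tau> (a j)" "b \<noteq> \<rho> (a j)" "b \<noteq> \<rho> (\<tau> (a j))"
        using b(2) j unfolding F_def by auto
      moreover have "\<tau> b \<noteq> a j" using calculation(3) r[OF b(1)] by auto
      moreover have "\<tau> b \<noteq> \<tau> (a j)" using calculation(4) r[OF b(1)] by metis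
      ultimately show ?thesis by auto
    qed
    show ?thesis
      unfolding disjoint_family_on_def a'_def
    proof (intro ballI impI)
      fix i j assume ij: "i \<in> {..<Suc n}" "j \<in> {..<Suc n}" "i \<noteq> j"
      show "{(a(n := b)) i, \<tau> ((a(n := b)) i)} \<inter> {(a(n := b)) j, \<tau> ((a(n := b)) j)} = {}"
      proof (cases "i = n")
        case True
        then show ?thesis using ij new by auto
      next
        case False
        note iF = this
        show ?thesis
        proof (cases "j = n")
          case True
          then show ?thesis using ij new iF by auto
        next
          case False
          then show ?thesis using ij iF a(2) unfolding disjoint_family_on_def by auto
        qed
      qed
    qed
  qed
  ultimately show ?case by blast
qed

lemma diag_prob_lt1:
  fixes M :: "'k::polish_space measure"
  assumes M: "prob_space M" and sM: "sets M = sets borel" and nt: "\<not> (\<exists>k. emeasure M {k} = 1)"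
  defines "D \<equiv> {z \<in> space (M \<Otimes>\<^sub>M M). fst z = snd z}"
  shows "D \<in> sets (M \<Otimes>\<^sub>M M)" "measure (M \<Otimes>\<^sub>M M) D < 1"
proof -
  interpret prob_space M by fact
  interpret P2: pair_prob_space M M by unfold_locales
  have mb: "measurable (M \<Otimes>\<^sub>M M) M = measurable (M \<Otimes>\<^sub>M M) borel"
    by (rule measurable_cong_sets[OF refl sM])
  have "fst \<in> borel_measurable (M \<Otimes>\<^sub>M M)" "snd \<in> borel_measurable (M \<Otimes>\<^sub>M M)"
    using measurable_fst measurable_snd mb by blast+
  then show Ds: "D \<in> sets (M \<Otimes>\<^sub>M M)" unfolding D_def by (rule measurable_equality_set)
  have pre: "Pair x -` D = {x}" if "x \<in> space M" for x
    using that unfolding D_def by (auto simp: space_pair_measure)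
  have "emeasure (M \<Otimes>\<^sub>M M) D = (\<integral>\<^sup>+x. emeasure M (Pair x -` D) \<partial>M)"
    using emeasure_pair_measure_alt[OF Ds] .
  also have "\<dots> = (\<integral>\<^sup>+x. emeasure M {x} \<partial>M)"
    by (rule nn_integral_cong) (simp add: pre)
  finally have eD: "emeasure (M \<Otimes>\<^sub>M M) D = (\<integral>\<^sup>+x. emeasure M {x} \<partial>M)" .
  have phim: "(\<lambda>x. emeasure M (Pair x -` D)) \<in> borel_measurable M"
    using measurable_emeasure_Pair[OF Ds] .
  have phim2: "(\<lambda>x. emeasure M {x}) \<in> borel_measurable M"
    using phim by (rule measurable_cong[THEN iffD1, rotated]) (simp add: pre)
  show "measure (M \<Otimes>\<^sub>M M) D < 1"
  proof (rule ccontr)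
    assume "\<not> measure (M \<Otimes>\<^sub>M M) D < 1"
    moreover have "measure (M \<Otimes>\<^sub>M M) D \<le> 1" by (rule P2.prob_le_1)
    ultimately have "measure (M \<Otimes>\<^sub>M M) D = 1" by simp
    then have e1: "(\<integral>\<^sup>+x. emeasure M {x} \<partial>M) = 1"
      using eD P2.emeasure_eq_measure by simp
    have "(\<integral>\<^sup>+x. (1 - emeasure M {x}) \<partial>M) = (\<integral>\<^sup>+x. 1 \<partial>M) - (\<integral>\<^sup>+x. emeasure M {x} \<partial>M)"
      by (rule nn_integral_diff) (auto simp: phim2 e1 intro!: AE_I2 emeasure_le_1)
    also have "\<dots> = 0" using e1 by (simp add: emeasure_space_1)
    moreover have mm: "(\<lambda>x. 1 - emeasure M {x}) \<in> borel_measurable M"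
      using phim2 by measurable
    ultimately have "AE x in M. 1 - emeasure M {x} = 0"
      using nn_integral_0_iff_AE[OF mm] by simp
    then have "AE x in M. False"
    proof (rule AE_mp)
      show "AE x in M. 1 - emeasure M {x} = 0 \<longrightarrow> False"
      proof (rule AE_I2, rule impI)
        fix x assume "1 - emeasure M {x} = 0"
        then have "1 \<le> emeasure M {x}" by (simp add: diff_eq_0_iff_ennreal)
        moreover have "emeasure M {x} \<le> 1" by (rule emeasure_le_1)
        ultimately have "emeasure M {x} = 1" by simp
        then show False using nt by blast
      qed
    qed
    then show False by simp
  qed
qed

lemma fix_null:
  fixes M :: "'k::polish_space measure" and I :: "'i set"
  assumes M: "prob_space M" and sM: "sets M = sets borel" and nt: "\<not> (\<exists>k. emeasure M {k} = 1)"
    and I: "countable I" and tI: "\<And>A. A \<in> I \<Longrightarrow> \<tau> A \<in> I"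
    and S: "infinite S" "S \<subseteq> I" and t: "\<And>A. A \<in> S \<Longrightarrow> \<tau> A \<noteq> A"
    and r: "\<And>A. A \<in> S \<Longrightarrow> \<rho> (\<tau> A) = A"
  shows "{x \<in> space (PiM I (\<lambda>_. M)). \<forall>A\<in>I. x (\<tau> A) = x A} \<in> null_sets (PiM I (\<lambda>_. M))"
proof -
  interpret prob_space M by fact
  define P where "P = PiM I (\<lambda>_. M)"
  interpret P: prob_space P unfolding P_def by (rule prob_space_PiM) (rule M)
  define D where "D = {z \<in> space (M \<Otimes>\<^sub>M M). fst z = snd z}"
  define p where "p = measure (M \<Otimes>\<^sub>M M) D"
  have Ds: "D \<in> sets (M \<Otimes>\<^sub>M M)" and p1: "p < 1"
    using diag_prob_lt1[OF M sM nt] unfolding D_def p_def by auto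
  have p0: "0 \<le> p" unfolding p_def by simp
  have Ine: "I \<noteq> {}" using S by auto
  have mb: "measurable N M = measurable N borel" for N :: "'z measure"
    by (rule measurable_cong_sets[OF refl sM])
  have comp: "(\<lambda>x. x A) \<in> measurable P M" if "A \<in> I" for A
    unfolding P_def using measurable_component_singleton[OF that] .
  have compJ: "(\<lambda>x. x A) \<in> measurable (PiM J (\<lambda>_. M)) M" if "A \<in> J" for A J
    using measurable_component_singleton[OF that] .
  define Fix where "Fix = {x \<in> space P. \<forall>A\<in>I. x (\<tau> A) = x A}"
  have "Fix = (\<Inter>A\<in>I. {x \<in> space P. x (\<tau> A) = x A})" unfolding Fix_def using Ine by auto
  also have "\<dots> \<in> sets P"
  proof (rule sets.countable_INT'[OF I Ine])
    show "(\<lambda>A. {x \<in> space P. x (\<tau> A) = x A}) ` I \<subseteq> sets P"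
    proof safe
      fix A assume "A \<in> I"
      then have "(\<lambda>x. x (\<tau> A)) \<in> borel_measurable P" "(\<lambda>x. x A) \<in> borel_measurable P"
        using comp tI mb by blast+
      then show "{x \<in> space P. x (\<tau> A) = x A} \<in> sets P" by (rule measurable_equality_set)
    qed
  qed
  finally have Fixs: "Fix \<in> sets P" .
  have indep: "P.indep_vars (\<lambda>_. M) (\<lambda>i x. x i) I"
  proof (subst P.indep_vars_iff_distr_eq_PiM'[OF Ine])
    show "P.random_variable M (\<lambda>x. x i)" if "i \<in> I" for i using comp[OF that] by simp
    have "distr P (Pi\<^sub>M I (\<lambda>_. M)) (\<lambda>x. \<lambda>i\<in>I. x i) = distr P P (\<lambda>x. x)"
      by (rule distr_cong) (auto simp: P_def space_PiM PiE_def extensional_restrict)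
    also have "\<dots> = PiM I (\<lambda>i. distr P M (\<lambda>x. x i))"
      unfolding distr_id P_def
      by (rule PiM_cong[OF refl]) (simp add: distr_PiM_component[OF M])
    finally show "distr P (Pi\<^sub>M I (\<lambda>_. M)) (\<lambda>x. \<lambda>i\<in>I. x i) = PiM I (\<lambda>i. distr P M (\<lambda>x. x i))" .
  qed
  have pair: "P.prob {x \<in> space P. x a = x b} = p" if ab: "a \<in> I" "b \<in> I" "a \<noteq> b" for a b
  proof -
    have iv0: "P.indep_var (PiM {a} (\<lambda>_. M)) (\<lambda>\<omega>. restrict (\<lambda>i. \<omega> i) {a}) (PiM {b} (\<lambda>_. M)) (\<lambda>\<omega>. restrict (\<lambda>i. \<omega> i) {b})"
      by (rule P.indep_var_restrict[OF indep]) (use ab in auto)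
    have iv1: "P.indep_var M ((\<lambda>y. y a) \<circ> (\<lambda>\<omega>. restrict (\<lambda>i. \<omega> i) {a})) M ((\<lambda>y. y b) \<circ> (\<lambda>\<omega>. restrict (\<lambda>i. \<omega> i) {b}))"
      by (rule P.indep_var_compose[OF iv0 compJ compJ]) auto
    have e1: "(\<lambda>y. y a) \<circ> (\<lambda>\<omega>. restrict (\<lambda>i. \<omega> i) {a}) = (\<lambda>x. x a)" by (auto simp: fun_eq_iff)
    have e2: "(\<lambda>y. y b) \<circ> (\<lambda>\<omega>. restrict (\<lambda>i. \<omega> i) {b}) = (\<lambda>x. x b)" by (auto simp: fun_eq_iff)
    have iv: "P.indep_var M (\<lambda>x. x a) M (\<lambda>x. x b)" using iv1 unfolding e1 e2 .
    have da: "distr P M (\<lambda>x. x a) = M" "distr P M (\<lambda>x. x b) = M"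
      unfolding P_def by (rule distr_PiM_component; use M ab in auto)+
    have dist: "distr P (M \<Otimes>\<^sub>M M) (\<lambda>x. (x a, x b)) = M \<Otimes>\<^sub>M M"
      using iv unfolding P.indep_var_distribution_eq da by simp
    have mf: "(\<lambda>x. (x a, x b)) \<in> measurable P (M \<Otimes>\<^sub>M M)"
      using comp ab by measurable
    have "p = measure (distr P (M \<Otimes>\<^sub>M M) (\<lambda>x. (x a, x b))) D" unfolding dist p_def ..
    also have "\<dots> = P.prob ((\<lambda>x. (x a, x b)) -` D \<inter> space P)"
      by (rule measure_distr[OF mf Ds])
    also have "(\<lambda>x. (x a, x b)) -` D \<inter> space P = {x \<in> space P. x a = x b}"
      using ab by (auto simp: D_def space_pair_measure P_def space_PiM)
    finally show ?thesis by simp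
  qed
  have "P.prob Fix \<le> p ^ n" for n
  proof -
    obtain a where a: "\<forall>j<n. a j \<in> S" and dj: "disjoint_family_on (\<lambda>j. {a j, \<tau> (a j)}) {..<n}"
      using pairs_exist[OF S(1) t r] by blast
    show ?thesis
    proof (cases "n = 0")
      case True
      then show ?thesis by simp
    next
      case False
      define K where "K = (\<lambda>j. {a j, \<tau> (a j)})"
      have aI: "a j \<in> I" "\<tau> (a j) \<in> I" "a j \<noteq> \<tau> (a j)" if "j < n" for j
        using a that S(2) tI t by force+
      have ind2: "P.indep_vars (\<lambda>j. PiM (K j) (\<lambda>_. M)) (\<lambda>j \<omega>. restrict (\<lambda>i. \<omega> i) (K j)) {..<n}"
        by (rule P.indep_vars_restrict[OF indep]) (use aI dj in \<open>auto simp: K_def\<close>)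
      define T where "T = (\<lambda>j. {y \<in> space (PiM (K j) (\<lambda>_. M)). y (a j) = y (\<tau> (a j))})"
      have Ts: "T j \<in> sets (PiM (K j) (\<lambda>_. M))" for j
      proof -
        have "(\<lambda>y. y (a j)) \<in> borel_measurable (PiM (K j) (\<lambda>_. M))"
             "(\<lambda>y. y (\<tau> (a j))) \<in> borel_measurable (PiM (K j) (\<lambda>_. M))"
          by (subst mb[symmetric], rule compJ, simp add: K_def)+
        then show ?thesis unfolding T_def by (rule measurable_equality_set)
      qed
      have pre: "(\<lambda>\<omega>. restrict (\<lambda>i. \<omega> i) (K j)) -` T j \<inter> space P = {x \<in> space P. x (a j) = x (\<tau> (a j))}"
        if "j < n" for j
        using aI[OF that] by (auto simp: T_def K_def P_def space_PiM PiE_iff extensional_def)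
      have rv: "(\<lambda>\<omega>. restrict (\<lambda>i. \<omega> i) (K j)) \<in> measurable P (PiM (K j) (\<lambda>_. M))" if "j < n" for j
        using aI[OF that] unfolding K_def by (intro measurable_restrict) (auto intro: comp)
      define E where "E = (\<Inter>j\<in>{..<n}. (\<lambda>\<omega>. restrict (\<lambda>i. \<omega> i) (K j)) -` T j \<inter> space P)"
      have "P.prob E = (\<Prod>j\<in>{..<n}. P.prob ((\<lambda>\<omega>. restrict (\<lambda>i. \<omega> i) (K j)) -` T j \<inter> space P))"
        unfolding E_def by (rule P.indep_varsD[OF ind2]) (use False Ts in auto)
      also have "\<dots> = (\<Prod>j\<in>{..<n}. p)"
        by (rule prod.cong[OF refl]) (simp add: pre pair aI)
      also have "\<dots> = p ^ n" by simp
      finally have pE: "P.prob E = p ^ n" .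
      have Es: "E \<in> sets P" unfolding E_def using False
        by (intro sets.finite_INT) (auto intro: measurable_sets[OF rv Ts])
      have "Fix \<subseteq> E" unfolding E_def Fix_def
        using pre aI by auto
      then show ?thesis using P.finite_measure_mono[OF _ Es] pE by simp
    qed
  qed
  then have "P.prob Fix = 0"
  proof -
    assume le: "\<And>n. P.prob Fix \<le> p ^ n"
    show ?thesis
    proof (rule ccontr)
      assume "P.prob Fix \<noteq> 0"
      then have pos: "P.prob Fix > 0" using measure_nonneg[of P Fix] by linarith
      have "\<bar>p\<bar> < 1" using p0 p1 by simp
      from Archimedean_eventually_pow_inverse[OF this pos] obtain N where
        "\<And>n. n \<ge> N \<Longrightarrow> \<bar>p ^ n\<bar> < P.prob Fix" unfolding eventually_sequentially by blast
      then have "\<bar>p ^ N\<bar> < P.prob Fix" by simp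
      then show False using le[of N] by simp
    qed
  qed
  then have "emeasure P Fix = 0" using P.emeasure_eq_measure by simp
  then show ?thesis using Fixs unfolding Fix_def P_def by (simp add: null_sets_def)
qed


lemma (in group) main_aux:
  fixes M :: "'k::polish_space measure"
  assumes "countable (carrier G)" and "infinite (carrier G)"
    and "subgroup C G" and "finite C"
    and "prime (card C)"
    and "prob_space M" and "sets M = sets borel"
    and "\<not> (\<exists>k. emeasure M {k} = 1)"
    and "infinite (lcosets (normalizer G C))"
  shows "\<forall>g \<in> carrier G. g \<noteq> \<one> \<longrightarrow>
           {x \<in> space (shift_space G C M). gen_shift G C g x = x} \<in> null_sets (shift_space G C M)"
proof (intro ballI impI)
  fix g assume g: "g \<in> carrier G" "g \<noteq> \<one>"
  have sC: "subgroup C G" and fC: "finite C" by fact+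
  have Cc: "C \<subseteq> carrier G" using sC subgroup.subset by blast
  define I where "I = lcosets C"
  define \<tau> where "\<tau> = (\<lambda>A. inv g <# A)"
  define \<rho> where "\<rho> = (\<lambda>A. g <# A)"
  define S where "S = {A \<in> lcosets C. inv g <# A \<noteq> A}"
  have kg: "inv g \<noteq> \<one>" using g by (metis inv_inv one_closed inv_one)
  have Sinf: "infinite S" unfolding S_def
    by (rule moved_infinite[OF sC fC assms(5) assms(2) assms(9)]) (use g kg in auto)
  have cI: "countable I" unfolding I_def LCOSETS_def using assms(1) by auto
  have AI: "A \<subseteq> carrier G" if "A \<in> I" for A
    using that lcosets_subset_PowG[OF sC] unfolding I_def by auto
  have tI: "\<tau> A \<in> I" if AIn: "A \<in> I" for A
  proof -
    obtain f where f: "f \<in> carrier G" "A = f <# C" using AIn unfolding I_def LCOSETS_def by auto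
    have "\<tau> A = (inv g \<otimes> f) <# C" unfolding \<tau>_def f(2) using lcos_m_assoc Cc f g by simp
    then show ?thesis unfolding I_def LCOSETS_def using f g by auto
  qed
  have r: "\<rho> (\<tau> A) = A" if "A \<in> I" for A
    unfolding \<rho>_def \<tau>_def using AI[OF that] g
    by (simp add: lcos_m_assoc l_coset_subset_G lcos_mult_one)
  have eq: "{x \<in> space (shift_space G C M). gen_shift G C g x = x}
      = {x \<in> space (PiM I (\<lambda>_. M)). \<forall>A\<in>I. x (\<tau> A) = x A}"
    unfolding shift_space_def gen_shift_def I_def \<tau>_def
    by (auto simp: fun_eq_iff space_PiM PiE_def extensional_def restrict_def)
  show "{x \<in> space (shift_space G C M). gen_shift G C g x = x} \<in> null_sets (shift_space G C M)"
    unfolding eq unfolding shift_space_def I_def[symmetric]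
  proof (rule fix_null[where S=S and \<rho>=\<rho>])
    show "S \<subseteq> I" unfolding S_def I_def by auto
    show "\<tau> A \<noteq> A" if "A \<in> S" for A using that unfolding S_def \<tau>_def by auto
    show "\<rho> (\<tau> A) = A" if "A \<in> S" for A using that r unfolding S_def I_def by auto
  qed (use assms(6,7,8) cI tI Sinf in auto)
qed

theorem lemma5p1:
  fixes G :: "('a, 'b) monoid_scheme" and C :: "'a set" and M :: "'k::polish_space measure"
  assumes "group G"
    and "countable (carrier G)" and "infinite (carrier G)"
    and "subgroup C G" and "finite C"
    and "cyclic_group (G\<lparr>carrier := C\<rparr>)"
    and "prime (card C)"
    and "prob_space M" and "sets M = sets borel"
    and "\<not> (\<exists>k. emeasure M {k} = 1)"
    and "infinite (lcosets\<^bsub>G\<^esub> (normalizer G C))"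
  shows "\<forall>g \<in> carrier G. g \<noteq> \<one>\<^bsub>G\<^esub> \<longrightarrow>
           {x \<in> space (shift_space G C M). gen_shift G C g x = x} \<in> null_sets (shift_space G C M)"
  using group.main_aux[OF assms(1-5,7-11)] by blast

end
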